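(* Let $(G;+)$ be a commutative groupoid with elements $r,s,t,u,v$ such that $x+u = v$ and $x+v = u$ for all $x \in \{r,s,t\}$, and $r+s = s$, $s+t = t$, $t+r = r$. Then the multisets $\langle r,s,t,u\rangle$ and $\langle r,s,t,v\rangle$ have the same deck. Moreover, either $r,s,t$ are pairwise distinct or $r = s = t$; in the former case $+$ is not associative, and in the latter case, if $u \neq v$, then $+$ is not left alternative (i.e., the identity $x+(x+y) = (x+x)+y$ fails).
   Context: A (finite) multiset over a set $X$ is a function $X \to \mathbb{N}$ with finite support; $\langle x_1,\dots,x_k\rangle$ denotes the multiset listing its elements with multiplicity. A commutative groupoid is a set $G$ with a commutative binary operation $+$. For a multiset $M = \langle m_1,\dots,m_n\rangle$ ($n\ge 2$) over $G$, the card $M_{\{i,j\}}$ ($i<j$) is obtained from $M$ by removing one occurrence each of $m_i$ and $m_j$ and adding one occurrence of $m_i+m_j$; the deck of $M$ is the multiset of all $\binom n2$ cards. *)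

theory Defs
  imports Main "HOL-Library.Multiset"
begin

definition card_of :: "('a \<Rightarrow> 'a \<Rightarrow> 'a) \<Rightarrow> 'a list \<Rightarrow> nat \<Rightarrow> nat \<Rightarrow> 'a multiset" where
  "card_of pl xs i j = add_mset (pl (xs ! i) (xs ! j)) (mset xs - {#xs ! i, xs ! j#})"

text \<open>The deck: multiset of all cards M_{i,j}, i<j<n, for the listing xs of M.\<close>
definition deck :: "('a \<Rightarrow> 'a \<Rightarrow> 'a) \<Rightarrow> 'a list \<Rightarrow> 'a multiset multiset" where
  "deck pl xs = mset (concat (map (\<lambda>i. map (\<lambda>j. card_of pl xs i j) [Suc i..<length xs]) [0..<length xs]))"

end

theory Submission
  imports Defs
begin

lemma deck4: "deck pl [a,b,c,d] = {# add_mset (pl a b) {#c,d#}, add_mset (pl a c) {#b,d#},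
   add_mset (pl a d) {#b,c#}, add_mset (pl b c) {#a,d#}, add_mset (pl b d) {#a,c#},
   add_mset (pl c d) {#a,b#} #}"
  by (simp add: deck_def card_of_def upt_rec add_mset_commute)

theorem mainTheorem7:
  fixes pl :: "'a \<Rightarrow> 'a \<Rightarrow> 'a" and r s t u v :: 'a
  assumes comm: "\<forall>x y. pl x y = pl y x"
    and uv: "\<forall>x\<in>{r, s, t}. pl x u = v \<and> pl x v = u"
    and rs: "pl r s = s" and st: "pl s t = t" and tr: "pl t r = r"
  shows "deck pl [r, s, t, u] = deck pl [r, s, t, v]
    \<and> ((r \<noteq> s \<and> s \<noteq> t \<and> r \<noteq> t) \<or> (r = s \<and> s = t))
    \<and> ((r \<noteq> s \<and> s \<noteq> t \<and> r \<noteq> t) \<longrightarrow> \<not> (\<forall>x y z. pl (pl x y) z = pl x (pl y z)))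
    \<and> ((r = s \<and> s = t \<and> u \<noteq> v) \<longrightarrow> \<not> (\<forall>x y. pl x (pl x y) = pl (pl x x) y))"
proof -
  have rt: "pl r t = r" using comm tr by metis
  have ru: "pl r u = v" "pl s u = v" "pl t u = v" "pl r v = u" "pl s v = u" "pl t v = u"
    using uv by auto
  have D: "deck pl [r, s, t, u] = deck pl [r, s, t, v]"
    unfolding deck4 using rs st rt ru by (simp add: add_mset_commute)
  have E: "(r \<noteq> s \<and> s \<noteq> t \<and> r \<noteq> t) \<or> (r = s \<and> s = t)"
    using rs st tr comm by metis
  have F: "(r \<noteq> s \<and> s \<noteq> t \<and> r \<noteq> t) \<longrightarrow> \<not> (\<forall>x y z. pl (pl x y) z = pl x (pl y z))"
  proof
    assume "r \<noteq> s \<and> s \<noteq> t \<and> r \<noteq> t"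
    moreover have "pl (pl r s) t = t" "pl r (pl s t) = r" using rs st rt by auto
    ultimately show "\<not> (\<forall>x y z. pl (pl x y) z = pl x (pl y z))" by metis
  qed
  have G: "(r = s \<and> s = t \<and> u \<noteq> v) \<longrightarrow> \<not> (\<forall>x y. pl x (pl x y) = pl (pl x x) y)"
  proof
    assume h: "r = s \<and> s = t \<and> u \<noteq> v"
    have "pl r (pl r u) = u" "pl (pl r r) u = v" using h rs ru by auto
    thus "\<not> (\<forall>x y. pl x (pl x y) = pl (pl x x) y)" using h by metis
  qed
  show ?thesis using D E F G by blast
qed

end
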